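(* Let $C>0$ and let $(u^k)_{k\ge0}$ be a nonnegative sequence satisfying $u^{k+1}\le-2C+2C\sqrt{1+u^k/C}$ for all $k\ge0$. Then $u^k\le C_2/k$ for all $k\ge1$, where $C_2=\max(8C,\,2\sqrt{C u^0})$. *)

theory Defs
  imports "HOL-Analysis.Analysis"
begin

end

theory Submission
  imports Defs
begin

lemma sqrt_le_aux: "0 \<le> z \<Longrightarrow> y \<le> z^2 \<Longrightarrow> sqrt y \<le> (z::real)"
  by (metis abs_of_nonneg real_sqrt_abs real_sqrt_le_mono)

lemma step1:
  fixes C a :: real assumes "C > 0" "a \<ge> 0"
  shows "- 2 * C + 2 * C * sqrt (1 + a / C) \<le> 2 * sqrt (C * a)"
proof -
  have "sqrt (1 + a / C) \<le> 1 + sqrt (a / C)"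
  proof (rule sqrt_le_aux)
    show "0 \<le> 1 + sqrt (a / C)" using assms by simp
    have "(1 + sqrt (a / C))^2 = 1 + 2 * sqrt (a/C) + a / C"
      using assms by (simp add: power2_eq_square algebra_simps)
    then show "1 + a / C \<le> (1 + sqrt (a / C))^2" using assms by simp
  qed
  hence "2 * C * sqrt (1 + a / C) \<le> 2 * C * (1 + sqrt (a / C))"
    using assms by (intro mult_left_mono) auto
  moreover have "C * sqrt (a / C) = sqrt (C * a)"
  proof -
    have "C * sqrt (a / C) = sqrt (C^2) * sqrt (a / C)" using assms by simp
    also have "\<dots> = sqrt (C^2 * (a / C))" by (simp only: real_sqrt_mult)
    also have "C^2 * (a / C) = C * a" using assms by (simp add: power2_eq_square)
    finally show ?thesis .
  qed
  ultimately show ?thesis by (simp add: algebra_simps)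
qed

lemma step2:
  fixes C x a b :: real assumes "C > 0" "0 \<le> x" "x \<le> a" "b \<ge> 0" "4 * C * (a - b) \<le> b^2"
  shows "- 2 * C + 2 * C * sqrt (1 + x / C) \<le> b"
proof -
  have "sqrt (1 + x / C) \<le> 1 + b / (2 * C)"
  proof (rule sqrt_le_aux)
    show "0 \<le> 1 + b / (2 * C)" using assms by simp
    have "(1 + b / (2 * C))^2 = 1 + b / C + b^2 / (4 * C^2)"
      using assms by (simp add: power2_eq_square field_simps)
    moreover have "x / C \<le> b / C + b^2 / (4 * C^2)"
    proof -
      have "x / C \<le> a / C" using assms by (simp add: divide_right_mono)
      moreover have "a / C \<le> b / C + b^2 / (4 * C^2)"
        using assms by (simp add: field_simps power2_eq_square)
      ultimately show ?thesis by linarith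
    qed
    ultimately show "1 + x / C \<le> (1 + b / (2 * C))^2" by simp
  qed
  hence "2 * C * sqrt (1 + x / C) \<le> 2 * C * (1 + b / (2 * C))"
    using assms by (intro mult_left_mono) auto
  also have "2 * C * (1 + b / (2 * C)) = 2 * C + b" using assms by (simp add: field_simps)
  finally show ?thesis by simp
qed

theorem lemma3:
  fixes C :: real and u :: "nat \<Rightarrow> real"
  assumes "C > 0"
    and "\<And>k. u k \<ge> 0"
    and "\<And>k. u (Suc k) \<le> - 2 * C + 2 * C * sqrt (1 + u k / C)"
  shows "\<forall>k\<ge>1. u k \<le> max (8 * C) (2 * sqrt (C * u 0)) / real k"
proof (intro allI impI)
  fix k :: nat assume "k \<ge> 1"
  define M where "M = max (8 * C) (2 * sqrt (C * u 0))"
  have M8: "M \<ge> 8 * C" unfolding M_def by simp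
  have "u k \<le> M / real k" using \<open>k \<ge> 1\<close>
  proof (induction k rule: dec_induct)
    case base
    have "u 1 \<le> 2 * sqrt (C * u 0)" using assms(3)[of 0] step1[OF assms(1) assms(2)[of 0]] by simp
    thus ?case unfolding M_def by simp
  next
    case (step n)
    have n: "real n \<ge> 1" using step.hyps by simp
    have "u (Suc n) \<le> M / real (Suc n)"
    proof (rule order_trans[OF assms(3)], rule step2[OF assms(1) assms(2) step.IH])
      show "0 \<le> M / real (Suc n)" using M8 assms(1) by simp
      have eq: "M / real n - M / real (Suc n) = M / (real n * (real n + 1))"
        using n by (simp add: field_simps)
      have "4 * C * (M / (real n * (real n + 1))) \<le> (M / real (Suc n))^2"
      proof -
        have "4 * C * (real n + 1) \<le> M * real n" using M8 n assms(1)
        proof -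
          have "4 * C * (real n + 1) \<le> 8 * C * real n" using n assms(1) by (simp add: algebra_simps)
          also have "\<dots> \<le> M * real n" using M8 n by (intro mult_right_mono) auto
          finally show ?thesis .
        qed
        hence "4 * C * (real n + 1) * M \<le> M * real n * M"
          using M8 assms(1) by (intro mult_right_mono) auto
        hence "4 * C * (real n + 1) * M / (real n * (real n + 1)^2) \<le> M * real n * M / (real n * (real n + 1)^2)"
          using n by (intro divide_right_mono) auto
        moreover have "4 * C * (real n + 1) * M / (real n * (real n + 1)^2) = 4 * C * (M / (real n * (real n + 1)))"
          using n by (simp add: power2_eq_square)
        moreover have "M * real n * M / (real n * (real n + 1)^2) = (M / real (Suc n))^2"
          using n by (simp add: power2_eq_square add.commute)
        ultimately show ?thesis by simp
      qed
      thus "4 * C * (M / real n - M / real (Suc n)) \<le> (M / real (Suc n))^2" using eq by simp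
    qed
    thus ?case .
  qed
  thus "u k \<le> max (8 * C) (2 * sqrt (C * u 0)) / real k" unfolding M_def .
qed

end
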